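(* Let the channel gains form an $m$-dependent frequency-selective channel with $K=N$, with each $|h_{n,n,k}|$ having a continuous distribution. Let $B_M$ be the user–resource bipartite graph connecting each user to his $M$ best REs (respectively, his $M$ worst REs), and let $G_m$ be the union of core graphs built with $X_{n,k}=|h_{n,n,k}|$ (respectively, $X_{n,k}=-|h_{n,n,k}|$). If $M=M_N\ge(m+1)(e+\varepsilon)\ln N$ for some $\varepsilon>0$ and $M/N\to0$, then $\Pr(G_m\subseteq B_M)\to1$ as $N\to\infty$ (i.e. with probability tending to one every edge of $G_m$ is an edge of $B_M$).
   Context: $N$ users, $K=N$ REs, complex channel gains $h_{n_1,n_2,k}$. Given an integer $m\ge0$ not depending on $N$, they form an $m$-dependent frequency-selective channel if: (i) for each pair $(n_1,n_2)$, $h_{n_1,n_2,1},\dots,h_{n_1,n_2,K}$ are identically distributed and $\Pr(|h_{n_1,n_2,k}|=0)=0$; (ii) the vectors $(h_{n_1,n_2,k})_{k=1}^K$ for distinct pairs are mutually independent; (iii) for each pair, $(h_{n_1,n_2,k})_k$ is $m$-dependent: for every $s$, $(h_{n_1,n_2,k})_{k\le s}$ is independent of $(h_{n_1,n_2,k})_{k>s+m}$. $|h_{n,n,(j)}|$ is the $j$-th smallest of $|h_{n,n,1}|,\dots,|h_{n,n,K}|$. $B_M$ (best version): bipartite graph on users and REs with edge $(n,k)$ iff $|h_{n,n,k}|\ge|h_{n,n,(K-M+1)}|$; worst version: edge iff $|h_{n,n,k}|\le|h_{n,n,(M)}|$. For a random variable $Y$, $\bar q_Y(p)=\min\{x:F_Y(x)\ge1-p\}$.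 For $i=0,\dots,m$ let $\mathcal I_i=\{j\in\{1,\dots,N\}:\,j\equiv i+1\pmod{m+1}\}$; the core graph $G_{m,i}$ has left vertices the users in $\mathcal I_i$, right vertices the REs in $\mathcal I_i$, and edge $(n,k)$ iff $X_{n,k}>\bar q_{X_{n,k}}\big(\frac{M}{e(K+m+1)}\big)$; $G_m=\bigcup_iG_{m,i}$. *)

theory Defs
  imports "HOL-Probability.Probability"
begin

text \<open>Users and REs are indexed by 1..N. h n1 n2 k \<omega> is the complex gain h_{n1,n2,k}
  as a random variable on the sample space of the probability space P.\<close>

definition mdep_channel ::
  "'a measure \<Rightarrow> nat \<Rightarrow> nat \<Rightarrow> (nat \<Rightarrow> nat \<Rightarrow> nat \<Rightarrow> 'a \<Rightarrow> complex) \<Rightarrow> bool" where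
  "mdep_channel P N m h \<longleftrightarrow>
     (\<forall>n1\<in>{1..N}. \<forall>n2\<in>{1..N}. \<forall>k\<in>{1..N}. h n1 n2 k \<in> borel_measurable P) \<and>
     \<comment> \<open>(i) identically distributed along k, and |h| = 0 with probability 0\<close>
     (\<forall>n1\<in>{1..N}. \<forall>n2\<in>{1..N}. \<forall>k\<in>{1..N}.
        distr P borel (h n1 n2 k) = distr P borel (h n1 n2 1) \<and>
        measure P {\<omega>\<in>space P. cmod (h n1 n2 k \<omega>) = 0} = 0) \<and>
     \<comment> \<open>(ii) the vectors (h_{n1,n2,k})_k for distinct pairs are mutually independent\<close>
     prob_space.indep_vars P (\<lambda>_. PiM {1..N} (\<lambda>_. borel))
        (\<lambda>(n1, n2) \<omega>. \<lambda>k\<in>{1..N}. h n1 n2 k \<omega>) ({1..N} \<times> {1..N}) \<and>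
     \<comment> \<open>(iii) m-dependence along k\<close>
     (\<forall>n1\<in>{1..N}. \<forall>n2\<in>{1..N}. \<forall>s.
        prob_space.indep_var P
          (PiM {1..min s N} (\<lambda>_. borel)) (\<lambda>\<omega>. \<lambda>k\<in>{1..min s N}. h n1 n2 k \<omega>)
          (PiM {s+m+1..N} (\<lambda>_. borel)) (\<lambda>\<omega>. \<lambda>k\<in>{s+m+1..N}. h n1 n2 k \<omega>))"

text \<open>j-th smallest (1-based) of f 1, ..., f K.\<close>
definition ordstat :: "(nat \<Rightarrow> real) \<Rightarrow> nat \<Rightarrow> nat \<Rightarrow> real" where
  "ordstat f K j = sort (map f [1..<K+1]) ! (j - 1)"

definition qbar :: "'a measure \<Rightarrow> ('a \<Rightarrow> real) \<Rightarrow> real \<Rightarrow> real" where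
  "qbar P Y p = Inf {x. cdf (distr P borel Y) x \<ge> 1 - p}"

definition B_best :: "(nat \<Rightarrow> nat \<Rightarrow> nat \<Rightarrow> 'a \<Rightarrow> complex) \<Rightarrow> nat \<Rightarrow> nat \<Rightarrow> 'a \<Rightarrow> (nat \<times> nat) set" where
  "B_best h N M \<omega> = {(n, k). n \<in> {1..N} \<and> k \<in> {1..N} \<and>
      cmod (h n n k \<omega>) \<ge> ordstat (\<lambda>j. cmod (h n n j \<omega>)) N (N - M + 1)}"

definition B_worst :: "(nat \<Rightarrow> nat \<Rightarrow> nat \<Rightarrow> 'a \<Rightarrow> complex) \<Rightarrow> nat \<Rightarrow> nat \<Rightarrow> 'a \<Rightarrow> (nat \<times> nat) set" where
  "B_worst h N M \<omega> = {(n, k). n \<in> {1..N} \<and> k \<in> {1..N} \<and>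
      cmod (h n n k \<omega>) \<le> ordstat (\<lambda>j. cmod (h n n j \<omega>)) N M}"

definition core_idx :: "nat \<Rightarrow> nat \<Rightarrow> nat \<Rightarrow> nat set" where
  "core_idx m N i = {j \<in> {1..N}. j mod (m + 1) = (i + 1) mod (m + 1)}"

definition core_graph ::
  "'a measure \<Rightarrow> (nat \<Rightarrow> nat \<Rightarrow> 'a \<Rightarrow> real) \<Rightarrow> nat \<Rightarrow> nat \<Rightarrow> nat \<Rightarrow> nat \<Rightarrow> 'a \<Rightarrow> (nat \<times> nat) set" where
  "core_graph P X m N M i \<omega> = {(n, k). n \<in> core_idx m N i \<and> k \<in> core_idx m N i \<and>
      X n k \<omega> > qbar P (X n k) (real M / (exp 1 * real (N + m + 1)))}"

definition G_union ::
  "'a measure \<Rightarrow> (nat \<Rightarrow> nat \<Rightarrow> 'a \<Rightarrow> real) \<Rightarrow> nat \<Rightarrow> nat \<Rightarrow> nat \<Rightarrow> 'a \<Rightarrow> (nat \<times> nat) set" where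
  "G_union P X m N M \<omega> = (\<Union>i\<in>{0..m}. core_graph P X m N M i \<omega>)"

end

theory Submission
  imports Defs
begin


lemma sorted_nth_P_iff:
  fixes xs :: "real list"
  assumes "sorted xs" "r < length xs" and dc: "\<And>y z. P y \<Longrightarrow> z \<le> y \<Longrightarrow> P z"
  shows "P (xs ! r) \<longleftrightarrow> r < length (filter P xs)"
  using assms(1,2)
proof (induction xs arbitrary: r)
  case Nil then show ?case by simp
next
  case (Cons a ys)
  have allge: "\<forall>y\<in>set ys. a \<le> y" using Cons.prems(1) by simp
  show ?case
  proof (cases "P a")
    case True
    then show ?thesis using Cons by (cases r) auto
  next
    case False
    have "filter P ys = []" using allge False dc by (auto simp: filter_empty_conv)
    moreover have "\<not> P ((a # ys) ! r)"
    proof (cases r)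
      case 0 then show ?thesis using False by simp
    next
      case (Suc r') then have "r' < length ys" using Cons.prems by simp
      then have "a \<le> ys ! r'" using allge by simp
      then show ?thesis using Suc False dc by auto
    qed
    ultimately show ?thesis using False by simp
  qed
qed

lemma ordstat_P_iff:
  assumes "1 \<le> r" "r \<le> K" and dc: "\<And>y z. P y \<Longrightarrow> z \<le> y \<Longrightarrow> P z"
  shows "P (ordstat f K r) \<longleftrightarrow> r \<le> card {j \<in> {1..K}. P (f j)}"
proof -
  let ?L = "map f [1..<K+1]"
  have "P (ordstat f K r) \<longleftrightarrow> r - 1 < length (filter P (sort ?L))"
    unfolding ordstat_def using assms by (intro sorted_nth_P_iff) auto
  also have "length (filter P (sort ?L)) = length (filter P ?L)"
    by (metis mset_filter mset_sort size_mset)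
  also have "\<dots> = length (filter (P \<circ> f) [1..<K+1])" by (simp add: filter_map)
  also have "\<dots> = card (set (filter (P \<circ> f) [1..<K+1]))"
    by (metis distinct_card distinct_filter distinct_upt)
  also have "set (filter (P \<circ> f) [1..<K+1]) = {j \<in> {1..K}. P (f j)}" by auto
  finally show ?thesis using assms by linarith
qed




lemma qbar_tail:
  assumes P: "prob_space P" and X: "X \<in> borel_measurable P" and p: "0 < p" "p < 1"
  shows "measure P {\<omega> \<in> space P. qbar P X p < X \<omega>} \<le> p"
proof -
  interpret prob_space P by fact
  define D where "D = distr P borel X"
  have rd: "real_distribution D" unfolding D_def using X by (rule real_distribution_distr)
  interpret D: real_distribution D by fact
  have cdfD: "cdf D x = prob {\<omega> \<in> space P. X \<omega> \<le> x}" for x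
    unfolding cdf_def D_def using X
    by (subst measure_distr) (auto intro!: arg_cong[where f=prob] simp: vimage_def)
  define S where "S = {x. 1 - p \<le> cdf D x}"
  have "(cdf D \<longlongrightarrow> 1) at_top" using D.cdf_lim_at_top_prob .
  then have "\<forall>\<^sub>F x in at_top. 1 - p < cdf D x" using p by (intro order_tendstoD) auto
  then obtain x0 where "1 - p < cdf D x0" by (metis eventually_at_top_linorder order.refl)
  then have ne: "S \<noteq> {}" unfolding S_def by (auto intro!: exI[of _ x0])
  have "(cdf D \<longlongrightarrow> 0) at_bot" using D.cdf_lim_at_bot .
  then have "\<forall>\<^sub>F x in at_bot. cdf D x < 1 - p" using p by (intro order_tendstoD) auto
  then obtain L where L: "\<And>x. x \<le> L \<Longrightarrow> cdf D x < 1 - p" by (auto simp: eventually_at_bot_linorder)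
  have bdd: "bdd_below S" unfolding S_def bdd_below_def
    by (metis (mono_tags, lifting) L mem_Collect_eq linorder_not_le less_imp_le not_le)
  define q where "q = Inf S"
  have q: "qbar P X p = q" unfolding q_def qbar_def S_def D_def ..
  have ev: "\<forall>\<^sub>F x in at_right q. 1 - p \<le> cdf D x"
  proof (rule eventually_mono[OF eventually_at_right_less])
    fix x assume "q < x"
    then obtain s where "s \<in> S" "s < x" using cInf_lessD[OF ne] unfolding q_def by blast
    then show "1 - p \<le> cdf D x" unfolding S_def using D.cdf_nondecreasing[of s x] by auto
  qed
  have "(cdf D \<longlongrightarrow> cdf D q) (at_right q)"
    using D.cdf_is_right_cont[of q] by (simp add: continuous_within)
  then have "1 - p \<le> cdf D q"
    by (rule tendsto_lowerbound[OF _ ev]) simp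
  moreover have "prob {\<omega> \<in> space P. q < X \<omega>} = 1 - prob {\<omega> \<in> space P. X \<omega> \<le> q}"
  proof -
    have "{\<omega> \<in> space P. q < X \<omega>} = space P - {\<omega> \<in> space P. X \<omega> \<le> q}" by auto
    then show ?thesis using X by (simp add: prob_compl)
  qed
  ultimately show ?thesis unfolding q cdfD by linarith
qed




context prob_space
begin

lemma exp_ind_meas:
  fixes Z :: "nat \<Rightarrow> 'a \<Rightarrow> complex" and \<phi> :: "complex \<Rightarrow> real"
  assumes Zm: "\<And>k. k \<in> {1..N} \<Longrightarrow> Z k \<in> borel_measurable M"
    and \<phi>m: "\<phi> \<in> borel_measurable borel" and C: "C \<subseteq> {1..N}"
  shows "(\<lambda>\<omega>. exp (\<Sum>k\<in>C. if q < \<phi> (Z k \<omega>) then 1 else 0::real)) \<in> borel_measurable M"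
proof -
  have "(\<lambda>\<omega>. (if q < \<phi> (Z k \<omega>) then 1 else 0::real)) \<in> borel_measurable M" if "k \<in> C" for k
  proof -
    have [measurable]: "Z k \<in> borel_measurable M" using Zm C that by auto
    note \<phi>m[measurable]
    show ?thesis by measurable
  qed
  then have "(\<lambda>\<omega>. (\<Sum>k\<in>C. if q < \<phi> (Z k \<omega>) then 1 else 0::real)) \<in> borel_measurable M"
    by (intro borel_measurable_sum) auto
  from measurable_compose[OF this borel_measurable_exp] show ?thesis by (simp add: o_def)
qed

lemma exp_ind_int:
  fixes Z :: "nat \<Rightarrow> 'a \<Rightarrow> complex" and \<phi> :: "complex \<Rightarrow> real"
  assumes Zm: "\<And>k. k \<in> {1..N} \<Longrightarrow> Z k \<in> borel_measurable M"
    and \<phi>m: "\<phi> \<in> borel_measurable borel" and C: "C \<subseteq> {1..N}"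
  shows "integrable M (\<lambda>\<omega>. exp (\<Sum>k\<in>C. if q < \<phi> (Z k \<omega>) then 1 else 0::real))"
proof (rule integrable_const_bound[where B="exp (card C)"])
  show "AE x in M. norm (exp (\<Sum>k\<in>C. if q < \<phi> (Z k x) then 1 else 0::real)) \<le> exp (real (card C))"
  proof (intro AE_I2)
    fix x
    have "(\<Sum>k\<in>C. if q < \<phi> (Z k x) then 1 else 0) \<le> (\<Sum>k\<in>C. 1::real)"
      by (intro sum_mono) auto
    then show "norm (exp (\<Sum>k\<in>C. if q < \<phi> (Z k x) then 1 else 0::real)) \<le> exp (real (card C))"
      by (simp only: real_norm_def abs_exp_cancel exp_le_cancel_iff) simp
  qed
qed (rule exp_ind_meas[OF assms])

lemma exp_single:
  fixes Z :: "'a \<Rightarrow> complex" and \<phi> :: "complex \<Rightarrow> real"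
  assumes Zm: "Z \<in> borel_measurable M"
    and \<phi>m: "\<phi> \<in> borel_measurable borel" 
    and tail: "prob {\<omega>\<in>space M. q < \<phi> (Z \<omega>)} \<le> p"
  shows "(\<integral>\<omega>. exp (if q < \<phi> (Z \<omega>) then 1 else 0) \<partial>M) \<le> 1 + (exp 1 - 1) * p"
proof -
  define E where "E = {\<omega>\<in>space M. q < \<phi> (Z \<omega>)}"
  have [measurable]: "Z \<in> borel_measurable M" "\<phi> \<in> borel_measurable borel" using assms by auto
  have Em: "E \<in> sets M" unfolding E_def by measurable
  have "(\<integral>\<omega>. exp (if q < \<phi> (Z \<omega>) then 1 else 0) \<partial>M) = (\<integral>\<omega>. 1 + (exp 1 - 1) * indicator E \<omega> \<partial>M)"
    by (rule Bochner_Integration.integral_cong) (auto simp: E_def indicator_def)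
  also have "\<dots> = 1 + (exp 1 - 1) * prob E"
    using Em by (subst Bochner_Integration.integral_add) (auto simp: prob_space less_top[symmetric] intro!: integrable_real_indicator)
  also have "\<dots> \<le> 1 + (exp 1 - 1) * p"
    using tail unfolding E_def[symmetric] by (intro add_left_mono mult_left_mono) (auto simp: one_le_exp_iff)
  finally show ?thesis .
qed


lemma mdep_exp_bound:
  fixes Z :: "nat \<Rightarrow> 'a \<Rightarrow> complex" and \<phi> :: "complex \<Rightarrow> real"
  assumes Zm: "\<And>k. k \<in> {1..N} \<Longrightarrow> Z k \<in> borel_measurable M"
    and \<phi>m: "\<phi> \<in> borel_measurable borel"
    and ind: "\<And>s. indep_var (PiM {1..min s N} (\<lambda>_. borel)) (\<lambda>\<omega>. \<lambda>k\<in>{1..min s N}. Z k \<omega>)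
                   (PiM {s+m+1..N} (\<lambda>_. borel)) (\<lambda>\<omega>. \<lambda>k\<in>{s+m+1..N}. Z k \<omega>)"
    and tail: "\<And>k. k \<in> {1..N} \<Longrightarrow> prob {\<omega>\<in>space M. q < \<phi> (Z k \<omega>)} \<le> p"
    and C: "C \<subseteq> {1..N}" "\<And>a b. a \<in> C \<Longrightarrow> b \<in> C \<Longrightarrow> a < b \<Longrightarrow> a + m < b"
    and p: "0 \<le> p"
  shows "(\<integral>\<omega>. exp (\<Sum>k\<in>C. if q < \<phi> (Z k \<omega>) then 1 else 0::real) \<partial>M) \<le> (1 + (exp 1 - 1) * p) ^ card C"
proof -
  have fin: "finite C" using C(1) finite_subset by blast
  have p0: "0 \<le> 1 + (exp 1 - 1) * p"
    using p by (metis add_nonneg_nonneg diff_ge_0_iff_ge mult_nonneg_nonneg one_le_exp_iff zero_le_one)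
  show ?thesis using fin C
  proof (induction C rule: finite_linorder_max_induct)
    case empty then show ?case by simp
  next
    case (insert b A)
    define Y where "Y k \<omega> = (if q < \<phi> (Z k \<omega>) then 1 else 0::real)" for k \<omega>
    have bN: "b \<in> {1..N}" and AN: "A \<subseteq> {1..N}" using insert.prems by auto
    have gap: "\<And>a. a \<in> A \<Longrightarrow> a + m < b" using insert by auto
    have IH: "(\<integral>\<omega>. exp (\<Sum>k\<in>A. Y k \<omega>) \<partial>M) \<le> (1 + (exp 1 - 1) * p) ^ card A"
      unfolding Y_def using insert.IH insert.prems by auto
    have single: "(\<integral>\<omega>. exp (Y b \<omega>) \<partial>M) \<le> 1 + (exp 1 - 1) * p"
      unfolding Y_def using Zm[OF bN] \<phi>m tail[OF bN] by (rule exp_single)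
    have bnot: "b \<notin> A" using insert.hyps by auto
    have split: "(\<lambda>\<omega>. exp (\<Sum>k\<in>insert b A. Y k \<omega>)) = (\<lambda>\<omega>. exp (\<Sum>k\<in>A. Y k \<omega>) * exp (Y b \<omega>))"
      using insert.hyps bnot by (simp add: exp_add mult.commute)
    have prodeq: "(\<integral>\<omega>. exp (\<Sum>k\<in>A. Y k \<omega>) * exp (Y b \<omega>) \<partial>M)
        = (\<integral>\<omega>. exp (\<Sum>k\<in>A. Y k \<omega>) \<partial>M) * (\<integral>\<omega>. exp (Y b \<omega>) \<partial>M)"
    proof (cases "A = {}")
      case True then show ?thesis by (simp add: prob_space)
    next
      case False
      then obtain a where "a \<in> A" by auto
      then have bm: "m + 1 \<le> b" using gap by fastforce
      define s where "s = b - (m + 1)"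
      have As: "A \<subseteq> {1..min s N}" using AN gap unfolding s_def by force
      have bs: "b \<in> {s+m+1..N}" using bN bm unfolding s_def by auto
      define g where "g v = exp (\<Sum>k\<in>A. if q < \<phi> (v k) then 1 else 0::real)" for v :: "nat \<Rightarrow> complex"
      define g' where "g' v = exp (if q < \<phi> (v b) then 1 else 0::real)" for v :: "nat \<Rightarrow> complex"
      have gm: "g \<in> borel_measurable (PiM {1..min s N} (\<lambda>_. borel))"
      proof -
        have "(\<lambda>v. (if q < \<phi> (v k) then 1 else 0::real)) \<in> borel_measurable (PiM {1..min s N} (\<lambda>_. borel))"
          if "k \<in> A" for k
        proof -
          have [measurable]: "(\<lambda>v. v k) \<in> measurable (PiM {1..min s N} (\<lambda>_. borel)) (borel :: complex measure)"
            using As that by (intro measurable_component_singleton) auto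
          note \<phi>m[measurable]
          show ?thesis by measurable
        qed
        then have "(\<lambda>v. (\<Sum>k\<in>A. if q < \<phi> (v k) then 1 else 0::real)) \<in> borel_measurable (PiM {1..min s N} (\<lambda>_. borel))"
          by (intro borel_measurable_sum) auto
        from measurable_compose[OF this borel_measurable_exp] show ?thesis by (simp add: o_def g_def[abs_def])
      qed
      have g'm: "g' \<in> borel_measurable (PiM {s+m+1..N} (\<lambda>_. borel))"
      proof -
        have [measurable]: "(\<lambda>v. v b) \<in> measurable (PiM {s+m+1..N} (\<lambda>_. borel)) (borel :: complex measure)"
          using bs by (intro measurable_component_singleton) auto
        note \<phi>m[measurable]
        show ?thesis unfolding g'_def by measurable
      qed
      have iv: "indep_var borel (g \<circ> (\<lambda>\<omega>. \<lambda>k\<in>{1..min s N}. Z k \<omega>)) borel (g' \<circ> (\<lambda>\<omega>. \<lambda>k\<in>{s+m+1..N}. Z k \<omega>))"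
        by (rule indep_var_compose[OF ind gm g'm])
      have e1: "(g \<circ> (\<lambda>\<omega>. \<lambda>k\<in>{1..min s N}. Z k \<omega>)) = (\<lambda>\<omega>. exp (\<Sum>k\<in>A. Y k \<omega>))"
      proof (rule ext)
        fix \<omega>
        have "(\<Sum>k\<in>A. if q < \<phi> ((\<lambda>k\<in>{1..min s N}. Z k \<omega>) k) then 1 else 0::real) = (\<Sum>k\<in>A. Y k \<omega>)"
          using As by (intro sum.cong) (auto simp: Y_def subset_iff)
        then show "(g \<circ> (\<lambda>\<omega>. \<lambda>k\<in>{1..min s N}. Z k \<omega>)) \<omega> = exp (\<Sum>k\<in>A. Y k \<omega>)"
          by (simp add: g_def)
      qed
      have e2: "(g' \<circ> (\<lambda>\<omega>. \<lambda>k\<in>{s+m+1..N}. Z k \<omega>)) = (\<lambda>\<omega>. exp (Y b \<omega>))"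
        using bs by (auto simp: g'_def Y_def intro!: ext)
      have i1: "integrable M (\<lambda>\<omega>. exp (\<Sum>k\<in>A. Y k \<omega>))"
        unfolding Y_def using Zm \<phi>m AN by (rule exp_ind_int)
      have i2: "integrable M (\<lambda>\<omega>. exp (Y b \<omega>))"
        using exp_ind_int[where Z=Z and N=N and C="{b}" and q=q and \<phi>=\<phi>, OF Zm \<phi>m] bN by (simp add: Y_def)
      show ?thesis using indep_var_lebesgue_integral[OF iv[unfolded e1 e2] i1 i2] .
    qed
    have nn: "0 \<le> (\<integral>\<omega>. exp (Y b \<omega>) \<partial>M)" by (intro integral_nonneg_AE) auto
    have "(\<integral>\<omega>. exp (\<Sum>k\<in>insert b A. Y k \<omega>) \<partial>M)
        = (\<integral>\<omega>. exp (\<Sum>k\<in>A. Y k \<omega>) \<partial>M) * (\<integral>\<omega>. exp (Y b \<omega>) \<partial>M)"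
      unfolding split prodeq ..
    also have "\<dots> \<le> (1 + (exp 1 - 1) * p) ^ card A * (1 + (exp 1 - 1) * p)"
      using IH single nn p0 by (intro mult_mono) auto
    also have "\<dots> = (1 + (exp 1 - 1) * p) ^ card (insert b A)"
      using insert.hyps bnot by simp
    finally show ?case unfolding Y_def .
  qed
qed

end



definition cls :: "nat \<Rightarrow> nat \<Rightarrow> nat \<Rightarrow> nat set" where
  "cls m N c = {k \<in> {1..N}. k mod (m + 1) = c}"

lemma cls_gap: "a \<in> cls m N c \<Longrightarrow> b \<in> cls m N c \<Longrightarrow> a < b \<Longrightarrow> a + m < b"
proof -
  assume a: "a \<in> cls m N c" and b: "b \<in> cls m N c" and ab: "a < b"
  have "b mod (m+1) = a mod (m+1)" using a b by (simp add: cls_def)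
  then have "(m+1) dvd b - a" using ab by (simp add: mod_eq_dvd_iff_nat)
  moreover have "0 < b - a" using ab by simp
  ultimately have "m + 1 \<le> b - a" by (simp add: dvd_imp_le)
  then show "a + m < b" by simp
qed

lemma cls_card: "real (card (cls m N c)) * real (m + 1) \<le> real (N + m + 1)"
proof -
  have "inj_on (\<lambda>k. k div (m+1)) (cls m N c)"
  proof (rule inj_onI)
    fix x y assume xy: "x \<in> cls m N c" "y \<in> cls m N c" and d: "x div (m+1) = y div (m+1)"
    then have md: "x mod (m+1) = y mod (m+1)" by (simp add: cls_def)
    have "x = x div (m+1) * (m+1) + x mod (m+1)" by (rule div_mult_mod_eq[symmetric])
    also have "\<dots> = y div (m+1) * (m+1) + y mod (m+1)" unfolding d md ..
    also have "\<dots> = y" by (rule div_mult_mod_eq)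
    finally show "x = y" .
  qed
  moreover have "(\<lambda>k. k div (m+1)) ` cls m N c \<subseteq> {0..N div (m+1)}"
    by (auto simp: cls_def div_le_mono)
  ultimately have "card (cls m N c) \<le> card {0..N div (m+1)}"
    by (intro card_inj_on_le) auto
  then have "card (cls m N c) \<le> N div (m+1) + 1" by simp
  then have "card (cls m N c) * (m+1) \<le> (N div (m+1) + 1) * (m+1)" by (intro mult_le_mono1)
  also have "\<dots> \<le> N + m + 1"
  proof -
    have "N div (m+1) * (m+1) \<le> N" by (rule div_times_less_eq_dividend)
    then show ?thesis by (simp add: algebra_simps)
  qed
  finally have "card (cls m N c) * (m+1) \<le> N + m + 1" .
  then show ?thesis by (simp only: of_nat_mult[symmetric] of_nat_le_iff)
qed

lemma cancel_aux: "(b::real) \<noteq> 0 \<Longrightarrow> a / (e * b) * (b / c) = a / (e * c)"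
  by (simp add: field_simps)

lemma cancel_aux2: "(exp 1 - 1) * (a / (exp 1 * b)) - a / b = - (a / (exp 1 * (b::real)))"
proof -
  have "exp 1 \<noteq> (0::real)" by simp
  then show ?thesis by (cases "b = 0") (simp_all add: field_simps)
qed

lemma cls_sub: "cls m N c \<subseteq> {1..N}" by (auto simp: cls_def)

context prob_space begin

lemma markov_exp:
  fixes S :: "'a \<Rightarrow> real"
  assumes Sm: "S \<in> borel_measurable M" and int: "integrable M (\<lambda>\<omega>. exp (S \<omega>))"
  shows "prob {\<omega>\<in>space M. t \<le> S \<omega>} \<le> (\<integral>\<omega>. exp (S \<omega>) \<partial>M) / exp t"
proof -
  define E where "E = {\<omega>\<in>space M. t \<le> S \<omega>}"
  have Em: "E \<in> sets M" unfolding E_def using Sm by measurable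
  have "exp t * prob E = (\<integral>\<omega>. exp t * indicator E \<omega> \<partial>M)" using Em by simp
  also have "\<dots> \<le> (\<integral>\<omega>. exp (S \<omega>) \<partial>M)"
  proof (rule integral_mono)
    show "integrable M (\<lambda>\<omega>. exp t * indicator E \<omega>)"
      using Em by (auto simp: less_top[symmetric] intro!: integrable_real_indicator)
    show "integrable M (\<lambda>\<omega>. exp (S \<omega>))" by fact
    fix x assume "x \<in> space M"
    then show "exp t * indicator E x \<le> exp (S x)" by (auto simp: E_def indicator_def)
  qed
  finally show ?thesis unfolding E_def[symmetric] by (simp add: field_simps)
qed

lemma class_bound:
  fixes Z :: "nat \<Rightarrow> 'a \<Rightarrow> complex" and \<phi> :: "complex \<Rightarrow> real"
  assumes Zm: "\<And>k. k \<in> {1..N} \<Longrightarrow> Z k \<in> borel_measurable M"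
    and \<phi>m: "\<phi> \<in> borel_measurable borel"
    and ind: "\<And>s. indep_var (PiM {1..min s N} (\<lambda>_. borel)) (\<lambda>\<omega>. \<lambda>k\<in>{1..min s N}. Z k \<omega>)
                   (PiM {s+m+1..N} (\<lambda>_. borel)) (\<lambda>\<omega>. \<lambda>k\<in>{s+m+1..N}. Z k \<omega>)"
    and tail: "\<And>k. k \<in> {1..N} \<Longrightarrow> prob {\<omega>\<in>space M. q < \<phi> (Z k \<omega>)} \<le> p"
    and p: "0 \<le> p" "p = Mn / (exp 1 * real (N + m + 1))"
  shows "prob {\<omega>\<in>space M. Mn / real (m+1) \<le> (\<Sum>k\<in>cls m N c. if q < \<phi> (Z k \<omega>) then 1 else 0::real)}
           \<le> exp (- (Mn / (exp 1 * real (m+1))))"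
proof -
  define C where "C = cls m N c"
  define S where "S \<omega> = (\<Sum>k\<in>C. if q < \<phi> (Z k \<omega>) then 1 else 0::real)" for \<omega>
  have CN: "C \<subseteq> {1..N}" unfolding C_def by (rule cls_sub)
  have Sm: "S \<in> borel_measurable M"
  proof -
    have "(\<lambda>\<omega>. (if q < \<phi> (Z k \<omega>) then 1 else 0::real)) \<in> borel_measurable M" if "k \<in> C" for k
    proof -
      have [measurable]: "Z k \<in> borel_measurable M" using Zm CN that by auto
      note \<phi>m[measurable]
      show ?thesis by measurable
    qed
    then show ?thesis unfolding S_def[abs_def] by (intro borel_measurable_sum) auto
  qed
  have int: "integrable M (\<lambda>\<omega>. exp (S \<omega>))" unfolding S_def using Zm \<phi>m CN by (rule exp_ind_int)
  have E: "(\<integral>\<omega>. exp (S \<omega>) \<partial>M) \<le> (1 + (exp 1 - 1) * p) ^ card C"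
    unfolding S_def using Zm \<phi>m ind tail CN cls_gap[of _ m N c] p(1) unfolding C_def
    by (rule mdep_exp_bound)
  also have "\<dots> \<le> exp ((exp 1 - 1) * p) ^ card C"
  proof (rule power_mono)
    show "1 + (exp 1 - 1) * p \<le> exp ((exp 1 - 1) * p)" by (metis add.commute exp_ge_add_one_self)
    show "0 \<le> 1 + (exp 1 - 1) * p" using p(1) by (metis add_nonneg_nonneg diff_ge_0_iff_ge mult_nonneg_nonneg one_le_exp_iff zero_le_one)
  qed
  also have "\<dots> = exp (real (card C) * ((exp 1 - 1) * p))" by (rule exp_of_nat_mult[symmetric])
  also have "\<dots> \<le> exp ((exp 1 - 1) * (Mn / (exp 1 * real (m+1))))"
  proof -
    have "p * card C \<le> Mn / (exp 1 * real (m+1))"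
    proof -
      have c: "real (card C) \<le> real (N+m+1) / real (m+1)"
        using cls_card[of m N c] unfolding C_def[symmetric] by (simp add: field_simps)
      have "p * card C \<le> p * (real (N+m+1) / real (m+1))" using c p(1) by (rule mult_left_mono)
      also have "\<dots> = Mn / (exp 1 * real (m+1))" unfolding p(2)
        by (rule cancel_aux) simp
      finally show ?thesis .
    qed
    moreover have "0 \<le> exp 1 - (1::real)" by (simp add: one_le_exp_iff)
    ultimately have "(exp 1 - 1) * (p * card C) \<le> (exp 1 - 1) * (Mn / (exp 1 * real (m+1)))"
      by (rule mult_left_mono)
    moreover have "real (card C) * ((exp 1 - 1) * p) = (exp 1 - 1) * (p * card C)" by (simp only: ac_simps)
    ultimately show ?thesis by (simp only: exp_le_cancel_iff)
  qed
  finally have Ebound: "(\<integral>\<omega>. exp (S \<omega>) \<partial>M) \<le> exp ((exp 1 - 1) * (Mn / (exp 1 * real (m+1))))" .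
  have "prob {\<omega>\<in>space M. Mn / real (m+1) \<le> S \<omega>} \<le> (\<integral>\<omega>. exp (S \<omega>) \<partial>M) / exp (Mn / real (m+1))"
    using Sm int by (rule markov_exp)
  also have "\<dots> \<le> exp ((exp 1 - 1) * (Mn / (exp 1 * real (m+1)))) / exp (Mn / real (m+1))"
    using Ebound by (simp add: divide_right_mono)
  also have "\<dots> = exp (- (Mn / (exp 1 * real (m+1))))"
    by (simp only: exp_diff[symmetric] cancel_aux2)
  finally show ?thesis unfolding S_def C_def .
qed

end



lemma card_sum_real: "finite A \<Longrightarrow> real (card {j \<in> A. Q j}) = (\<Sum>j\<in>A. if Q j then 1 else 0::real)"
proof -
  assume f: "finite A"
  have "(\<Sum>j\<in>A. if Q j then 1 else 0::real) = (\<Sum>j\<in>{j\<in>A. Q j}. 1)"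
    using f by (rule sum.inter_filter[symmetric])
  then show ?thesis by simp
qed

lemma card_split: "finite A \<Longrightarrow> card {x\<in>A. P x} + card {x\<in>A. \<not> P x} = card A"
proof -
  assume f: "finite A"
  have "A = {x\<in>A. P x} \<union> {x\<in>A. \<not> P x}" by auto
  then have "card A = card ({x\<in>A. P x} \<union> {x\<in>A. \<not> P x})" by simp
  also have "\<dots> = card {x\<in>A. P x} + card {x\<in>A. \<not> P x}"
    using f by (intro card_Un_disjoint) auto
  finally show ?thesis by simp
qed

context prob_space begin

lemma pred_card:
  fixes Q :: "nat \<Rightarrow> 'a \<Rightarrow> bool"
  assumes Qm: "\<And>j. j \<in> {1..N} \<Longrightarrow> Measurable.pred M (\<lambda>\<omega>. Q j \<omega>)"
  shows "Measurable.pred M (\<lambda>\<omega>. r \<le> card {j \<in> {1..N}. Q j \<omega>})"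
proof -
  have "(\<lambda>\<omega>. (if Q j \<omega> then 1 else 0::real)) \<in> borel_measurable M" if "j \<in> {1..N}" for j
  proof -
    have "{\<omega>\<in>space M. Q j \<omega>} \<in> sets M" using Qm[OF that] unfolding pred_def .
    then show ?thesis by (intro measurable_If) auto
  qed
  then have [measurable]: "(\<lambda>\<omega>. (\<Sum>j\<in>{1..N}. if Q j \<omega> then 1 else 0::real)) \<in> borel_measurable M"
    by (intro borel_measurable_sum) auto
  have "Measurable.pred M (\<lambda>\<omega>. real r \<le> (\<Sum>j\<in>{1..N}. if Q j \<omega> then 1 else 0::real))" by measurable
  moreover have "(r \<le> card {j \<in> {1..N}. Q j \<omega>}) \<longleftrightarrow> real r \<le> (\<Sum>j\<in>{1..N}. if Q j \<omega> then 1 else 0::real)" for \<omega>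
    by (simp add: card_sum_real[symmetric])
  ultimately show ?thesis by simp
qed


lemma generic:
  fixes Z :: "nat \<Rightarrow> nat \<Rightarrow> nat \<Rightarrow> 'a \<Rightarrow> complex" and \<phi> :: "complex \<Rightarrow> real"
    and Bset :: "'a \<Rightarrow> (nat \<times> nat) set"
  assumes chan: "mdep_channel M N m Z"
    and \<phi>m: "\<phi> \<in> borel_measurable borel"
    and Mn: "1 \<le> Mn" "Mn \<le> N"
    and Bm: "\<And>n k. n \<in> {1..N} \<Longrightarrow> k \<in> {1..N} \<Longrightarrow> Measurable.pred M (\<lambda>\<omega>. (n,k) \<in> Bset \<omega>)"
    and Bfail: "\<And>\<omega> n k. \<omega> \<in> space M \<Longrightarrow> n \<in> {1..N} \<Longrightarrow> k \<in> {1..N} \<Longrightarrow> (n,k) \<notin> Bset \<omega> \<Longrightarrow>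
                  Mn \<le> card {j\<in>{1..N}. \<phi> (Z n n k \<omega>) < \<phi> (Z n n j \<omega>)}"
  shows "1 - real N * real (m+1) * exp (- (real Mn / (exp 1 * real (m+1))))
           \<le> prob {\<omega>\<in>space M. G_union M (\<lambda>n k \<omega>. \<phi> (Z n n k \<omega>)) m N Mn \<omega> \<subseteq> Bset \<omega>}"
proof -
  define p where "p = real Mn / (exp 1 * real (N+m+1))"
  define bnd where "bnd = exp (- (real Mn / (exp 1 * real (m+1))))"
  have e1: "(1::real) < exp 1" by simp
  have p0: "0 < p" unfolding p_def using Mn by (intro divide_pos_pos) auto
  have p1: "p < 1"
  proof -
    have "real Mn < 1 * real (N+m+1)" using Mn by simp
    also have "\<dots> \<le> exp 1 * real (N+m+1)" using e1 by (intro mult_right_mono) auto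
    finally show ?thesis unfolding p_def by simp
  qed
  have Zm: "\<And>n k. n \<in> {1..N} \<Longrightarrow> k \<in> {1..N} \<Longrightarrow> Z n n k \<in> borel_measurable M"
    using chan unfolding mdep_channel_def by blast
  have ident: "\<And>n k. n \<in> {1..N} \<Longrightarrow> k \<in> {1..N} \<Longrightarrow> distr M borel (Z n n k) = distr M borel (Z n n 1)"
    using chan unfolding mdep_channel_def by blast
  have ind: "\<And>n s. n \<in> {1..N} \<Longrightarrow> indep_var (PiM {1..min s N} (\<lambda>_. borel)) (\<lambda>\<omega>. \<lambda>k\<in>{1..min s N}. Z n n k \<omega>)
                   (PiM {s+m+1..N} (\<lambda>_. borel)) (\<lambda>\<omega>. \<lambda>k\<in>{s+m+1..N}. Z n n k \<omega>)"
    using chan unfolding mdep_channel_def by blast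
  define q where "q n = qbar M (\<lambda>\<omega>. \<phi> (Z n n 1 \<omega>)) p" for n
  have qeq: "qbar M (\<lambda>\<omega>. \<phi> (Z n n k \<omega>)) p = q n" if n: "n \<in> {1..N}" and k: "k \<in> {1..N}" for n k
  proof -
    have 1: "1 \<in> {1..N}" using k by auto
    have "distr M borel (\<lambda>\<omega>. \<phi> (Z n n k \<omega>)) = distr (distr M borel (Z n n k)) borel \<phi>"
      using distr_distr[OF \<phi>m Zm[OF n k]] by (simp add: o_def)
    also have "\<dots> = distr (distr M borel (Z n n 1)) borel \<phi>" using ident[OF n k] by simp
    also have "\<dots> = distr M borel (\<lambda>\<omega>. \<phi> (Z n n 1 \<omega>))"
      using distr_distr[OF \<phi>m Zm[OF n 1]] by (simp add: o_def)
    finally show ?thesis unfolding q_def qbar_def by simp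
  qed
  have tail: "prob {\<omega>\<in>space M. q n < \<phi> (Z n n k \<omega>)} \<le> p" if n: "n \<in> {1..N}" and k: "k \<in> {1..N}" for n k
  proof -
    have "(\<lambda>\<omega>. \<phi> (Z n n k \<omega>)) \<in> borel_measurable M"
      using measurable_compose[OF Zm[OF n k] \<phi>m] by (simp add: o_def)
    from qbar_tail[OF prob_space_axioms this p0 p1] show ?thesis unfolding qeq[OF n k] .
  qed
  define Y where "Y n j \<omega> = (if q n < \<phi> (Z n n j \<omega>) then 1 else 0::real)" for n j \<omega>
  define E where "E n c = {\<omega>\<in>space M. real Mn / real (m+1) \<le> (\<Sum>k\<in>cls m N c. Y n k \<omega>)}" for n c
  have Em: "E n c \<in> sets M" if n: "n \<in> {1..N}" for n c
  proof -
    have "(\<lambda>\<omega>. Y n k \<omega>) \<in> borel_measurable M" if "k \<in> cls m N c" for k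
    proof -
      have [measurable]: "Z n n k \<in> borel_measurable M" using that cls_sub[of m N c] by (intro Zm[OF n]) auto
      note \<phi>m[measurable]
      show ?thesis unfolding Y_def by measurable
    qed
    then have [measurable]: "(\<lambda>\<omega>. \<Sum>k\<in>cls m N c. Y n k \<omega>) \<in> borel_measurable M"
      by (intro borel_measurable_sum) auto
    show ?thesis unfolding E_def by measurable
  qed
  have Eb: "prob (E n c) \<le> bnd" if n: "n \<in> {1..N}" for n c
  proof -
    have "prob {\<omega>\<in>space M. real Mn / real (m+1) \<le> (\<Sum>k\<in>cls m N c. if q n < \<phi> (Z n n k \<omega>) then 1 else 0::real)}
           \<le> exp (- (real Mn / (exp 1 * real (m+1))))"
      by (rule class_bound[where Z="Z n n" and N=N and \<phi>=\<phi> and m=m and q="q n" and p=p and Mn="real Mn", OF Zm[OF n] \<phi>m ind[OF n] tail[OF n]])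
         (use p0 in \<open>simp_all add: p_def\<close>)
    then show ?thesis unfolding E_def Y_def bnd_def .
  qed
  define I where "I = {1..N} \<times> {..m}"
  define U where "U = (\<Union>(n,c)\<in>I. E n c)"
  have Um: "U \<in> sets M" unfolding U_def I_def using Em by (intro sets.finite_UN) auto
  have "prob U \<le> (\<Sum>i\<in>I. prob (case_prod E i))"
    unfolding U_def by (rule finite_measure_subadditive_finite) (auto simp: I_def Em)
  also have "\<dots> \<le> real (card I) * bnd"
    using Eb unfolding I_def by (intro sum_bounded_above) auto
  also have "real (card I) = real N * real (m+1)" unfolding I_def by (simp add: algebra_simps)
  finally have Ub: "prob U \<le> real N * real (m+1) * bnd" .
  define Good where "Good = {\<omega>\<in>space M. G_union M (\<lambda>n k \<omega>. \<phi> (Z n n k \<omega>)) m N Mn \<omega> \<subseteq> Bset \<omega>}"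
  define Dk where "Dk n k = (\<exists>i\<in>{0..m}. n \<in> core_idx m N i \<and> k \<in> core_idx m N i)" for n k
  have Gchar: "G_union M (\<lambda>n k \<omega>. \<phi> (Z n n k \<omega>)) m N Mn \<omega> \<subseteq> Bset \<omega> \<longleftrightarrow>
      (\<forall>n\<in>{1..N}. \<forall>k\<in>{1..N}. Dk n k \<longrightarrow> q n < \<phi> (Z n n k \<omega>) \<longrightarrow> (n,k) \<in> Bset \<omega>)" for \<omega>
  proof -
    have cs: "core_idx m N i \<subseteq> {1..N}" for i by (auto simp: core_idx_def)
    have "(n,k) \<in> G_union M (\<lambda>n k \<omega>. \<phi> (Z n n k \<omega>)) m N Mn \<omega> \<longleftrightarrow>
          n \<in> {1..N} \<and> k \<in> {1..N} \<and> Dk n k \<and> q n < \<phi> (Z n n k \<omega>)" for n k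
      unfolding G_union_def core_graph_def Dk_def p_def[symmetric]
      using cs qeq by (auto simp: subset_iff)
    then show ?thesis by auto
  qed
  have Goodm: "Good \<in> sets M"
  proof -
    have "Measurable.pred M (\<lambda>\<omega>. \<forall>n\<in>{1..N}. \<forall>k\<in>{1..N}. Dk n k \<longrightarrow> q n < \<phi> (Z n n k \<omega>) \<longrightarrow> (n,k) \<in> Bset \<omega>)"
    proof (intro pred_intros_countable_bounded(3))
      fix n k assume n: "n \<in> {1..N}" and k: "k \<in> {1..N}"
      have [measurable]: "Z n n k \<in> borel_measurable M" using Zm[OF n k] .
      have [measurable]: "Measurable.pred M (\<lambda>\<omega>. (n,k) \<in> Bset \<omega>)" using Bm[OF n k] .
      note \<phi>m[measurable]
      show "Measurable.pred M (\<lambda>\<omega>. Dk n k \<longrightarrow> q n < \<phi> (Z n n k \<omega>) \<longrightarrow> (n,k) \<in> Bset \<omega>)" by measurable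
    qed
    then have "{\<omega>\<in>space M. \<forall>n\<in>{1..N}. \<forall>k\<in>{1..N}. Dk n k \<longrightarrow> q n < \<phi> (Z n n k \<omega>) \<longrightarrow> (n,k) \<in> Bset \<omega>} \<in> sets M"
      unfolding pred_def .
    moreover have "Good = {\<omega>\<in>space M. \<forall>n\<in>{1..N}. \<forall>k\<in>{1..N}. Dk n k \<longrightarrow> q n < \<phi> (Z n n k \<omega>) \<longrightarrow> (n,k) \<in> Bset \<omega>}"
      unfolding Good_def using Gchar by blast
    ultimately show ?thesis by simp
  qed
  have sub: "space M - U \<subseteq> Good"
  proof
    fix \<omega> assume \<omega>: "\<omega> \<in> space M - U"
    have "(n,k) \<in> Bset \<omega>" if n: "n \<in> {1..N}" and k: "k \<in> {1..N}" and qk: "q n < \<phi> (Z n n k \<omega>)" for n k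
    proof (rule ccontr)
      assume nb: "(n,k) \<notin> Bset \<omega>"
      have "Mn \<le> card {j\<in>{1..N}. \<phi> (Z n n k \<omega>) < \<phi> (Z n n j \<omega>)}"
        using \<omega> n k nb by (intro Bfail) auto
      also have "\<dots> \<le> card {j\<in>{1..N}. q n < \<phi> (Z n n j \<omega>)}"
        using qk by (intro card_mono) auto
      finally have "real Mn \<le> real (card {j\<in>{1..N}. q n < \<phi> (Z n n j \<omega>)})" by simp
      also have "\<dots> = (\<Sum>j\<in>{1..N}. Y n j \<omega>)" unfolding Y_def by (rule card_sum_real) simp
      also have "\<dots> = (\<Sum>c\<in>{..m}. \<Sum>j\<in>{x. x \<in> {1..N} \<and> x mod (m+1) = c}. Y n j \<omega>)"
        by (rule sum.group[symmetric]) auto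
      also have "\<dots> = (\<Sum>c\<in>{..m}. \<Sum>j\<in>cls m N c. Y n j \<omega>)" unfolding cls_def by simp
      also have "\<dots> < (\<Sum>c\<in>{..m}. real Mn / real (m+1))"
      proof (rule sum_strict_mono)
        fix c assume c: "c \<in> {..m}"
        have "\<omega> \<notin> E n c" using \<omega> n c unfolding U_def I_def by auto
        then show "(\<Sum>j\<in>cls m N c. Y n j \<omega>) < real Mn / real (m+1)" using \<omega> unfolding E_def by auto
      qed auto
      also have "\<dots> = real Mn" by simp
      finally show False by simp
    qed
    then show "\<omega> \<in> Good" using \<omega> unfolding Good_def Gchar by auto
  qed
  have "prob (space M - U) \<le> prob Good" using sub Goodm by (intro finite_measure_mono) auto
  moreover have "prob (space M - U) = 1 - prob U" using Um by (rule prob_compl)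
  ultimately show ?thesis using Ub unfolding Good_def bnd_def by linarith
qed

end



lemma best_bound:
  fixes P :: "'a measure" and Z :: "nat \<Rightarrow> nat \<Rightarrow> nat \<Rightarrow> 'a \<Rightarrow> complex"
  assumes P: "prob_space P" and chan: "mdep_channel P N m Z" and Mn: "1 \<le> Mn" "Mn \<le> N"
  shows "1 - real N * real (m+1) * exp (- (real Mn / (exp 1 * real (m+1))))
    \<le> measure P {\<omega>\<in>space P. G_union P (\<lambda>n k \<omega>. cmod (Z n n k \<omega>)) m N Mn \<omega> \<subseteq> B_best Z N Mn \<omega>}"
proof -
  interpret prob_space P by fact
  have Zm: "\<And>n k. n \<in> {1..N} \<Longrightarrow> k \<in> {1..N} \<Longrightarrow> Z n n k \<in> borel_measurable P"
    using chan unfolding mdep_channel_def by blast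
  have iff: "(n,k) \<in> B_best Z N Mn \<omega> \<longleftrightarrow> N - Mn + 1 \<le> card {j\<in>{1..N}. cmod (Z n n j \<omega>) \<le> cmod (Z n n k \<omega>)}"
    if n: "n \<in> {1..N}" and k: "k \<in> {1..N}" for n k \<omega>
  proof -
    have "ordstat (\<lambda>j. cmod (Z n n j \<omega>)) N (N - Mn + 1) \<le> cmod (Z n n k \<omega>) \<longleftrightarrow>
          N - Mn + 1 \<le> card {j\<in>{1..N}. cmod (Z n n j \<omega>) \<le> cmod (Z n n k \<omega>)}"
      using Mn by (intro ordstat_P_iff[where P="\<lambda>y. y \<le> cmod (Z n n k \<omega>)"]) auto
    then show ?thesis using n k unfolding B_best_def by auto
  qed
  show ?thesis
  proof (rule generic[OF chan borel_measurable_norm Mn])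
    fix n k assume n: "n \<in> {1..N}" and k: "k \<in> {1..N}"
    have pc: "Measurable.pred P (\<lambda>\<omega>. N - Mn + 1 \<le> card {j\<in>{1..N}. cmod (Z n n j \<omega>) \<le> cmod (Z n n k \<omega>)})"
    proof (rule pred_card)
      fix j assume j: "j \<in> {1..N}"
      have [measurable]: "Z n n j \<in> borel_measurable P" "Z n n k \<in> borel_measurable P" using Zm n k j by auto
      show "Measurable.pred P (\<lambda>\<omega>. cmod (Z n n j \<omega>) \<le> cmod (Z n n k \<omega>))" by measurable
    qed
    have eq: "(\<lambda>\<omega>. (n,k) \<in> B_best Z N Mn \<omega>) = (\<lambda>\<omega>. N - Mn + 1 \<le> card {j\<in>{1..N}. cmod (Z n n j \<omega>) \<le> cmod (Z n n k \<omega>)})"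
      by (rule ext) (rule iff[OF n k])
    show "Measurable.pred P (\<lambda>\<omega>. (n,k) \<in> B_best Z N Mn \<omega>)" unfolding eq by (rule pc)
  next
    fix \<omega> n k assume n: "n \<in> {1..N}" and k: "k \<in> {1..N}" and nb: "(n,k) \<notin> B_best Z N Mn \<omega>"
    have a: "card {j\<in>{1..N}. cmod (Z n n j \<omega>) \<le> cmod (Z n n k \<omega>)} \<le> N - Mn"
      using iff[OF n k] nb by simp
    have "card {j\<in>{1..N}. cmod (Z n n k \<omega>) < cmod (Z n n j \<omega>)} + card {j\<in>{1..N}. \<not> cmod (Z n n k \<omega>) < cmod (Z n n j \<omega>)} = N"
      using card_split[of "{1..N}" "\<lambda>j. cmod (Z n n k \<omega>) < cmod (Z n n j \<omega>)"] by simp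
    moreover have "{j\<in>{1..N}. \<not> cmod (Z n n k \<omega>) < cmod (Z n n j \<omega>)} = {j\<in>{1..N}. cmod (Z n n j \<omega>) \<le> cmod (Z n n k \<omega>)}"
      by auto
    ultimately have "card {j\<in>{1..N}. cmod (Z n n k \<omega>) < cmod (Z n n j \<omega>)} + card {j\<in>{1..N}. cmod (Z n n j \<omega>) \<le> cmod (Z n n k \<omega>)} = N"
      by (simp only:)
    then show "Mn \<le> card {j\<in>{1..N}. cmod (Z n n k \<omega>) < cmod (Z n n j \<omega>)}"
      using a Mn by linarith
  qed
qed

lemma worst_bound:
  fixes P :: "'a measure" and Z :: "nat \<Rightarrow> nat \<Rightarrow> nat \<Rightarrow> 'a \<Rightarrow> complex"
  assumes P: "prob_space P" and chan: "mdep_channel P N m Z" and Mn: "1 \<le> Mn" "Mn \<le> N"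
  shows "1 - real N * real (m+1) * exp (- (real Mn / (exp 1 * real (m+1))))
    \<le> measure P {\<omega>\<in>space P. G_union P (\<lambda>n k \<omega>. - cmod (Z n n k \<omega>)) m N Mn \<omega> \<subseteq> B_worst Z N Mn \<omega>}"
proof -
  interpret prob_space P by fact
  have Zm: "\<And>n k. n \<in> {1..N} \<Longrightarrow> k \<in> {1..N} \<Longrightarrow> Z n n k \<in> borel_measurable P"
    using chan unfolding mdep_channel_def by blast
  have iff: "(n,k) \<in> B_worst Z N Mn \<omega> \<longleftrightarrow> \<not> Mn \<le> card {j\<in>{1..N}. cmod (Z n n j \<omega>) < cmod (Z n n k \<omega>)}"
    if n: "n \<in> {1..N}" and k: "k \<in> {1..N}" for n k \<omega>
  proof -
    have "ordstat (\<lambda>j. cmod (Z n n j \<omega>)) N Mn < cmod (Z n n k \<omega>) \<longleftrightarrow>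
          Mn \<le> card {j\<in>{1..N}. cmod (Z n n j \<omega>) < cmod (Z n n k \<omega>)}"
      using Mn by (intro ordstat_P_iff[where P="\<lambda>y. y < cmod (Z n n k \<omega>)"]) auto
    then show ?thesis using n k unfolding B_worst_def by auto
  qed
  have phim: "(\<lambda>z. - cmod z) \<in> borel_measurable borel" by measurable
  show ?thesis
  proof (rule generic[OF chan phim Mn])
    fix n k assume n: "n \<in> {1..N}" and k: "k \<in> {1..N}"
    have pc: "Measurable.pred P (\<lambda>\<omega>. Mn \<le> card {j\<in>{1..N}. cmod (Z n n j \<omega>) < cmod (Z n n k \<omega>)})"
    proof (rule pred_card)
      fix j assume j: "j \<in> {1..N}"
      have [measurable]: "Z n n j \<in> borel_measurable P" "Z n n k \<in> borel_measurable P" using Zm n k j by auto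
      show "Measurable.pred P (\<lambda>\<omega>. cmod (Z n n j \<omega>) < cmod (Z n n k \<omega>))" by measurable
    qed
    have eq: "(\<lambda>\<omega>. (n,k) \<in> B_worst Z N Mn \<omega>) = (\<lambda>\<omega>. \<not> Mn \<le> card {j\<in>{1..N}. cmod (Z n n j \<omega>) < cmod (Z n n k \<omega>)})"
      by (rule ext) (rule iff[OF n k])
    show "Measurable.pred P (\<lambda>\<omega>. (n,k) \<in> B_worst Z N Mn \<omega>)" unfolding eq using pc by (rule pred_intros_logic(2))
  next
    fix \<omega> n k assume n: "n \<in> {1..N}" and k: "k \<in> {1..N}" and nb: "(n,k) \<notin> B_worst Z N Mn \<omega>"
    have "Mn \<le> card {j\<in>{1..N}. cmod (Z n n j \<omega>) < cmod (Z n n k \<omega>)}"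
      using nb iff[OF n k] by blast
    moreover have "{j\<in>{1..N}. - cmod (Z n n k \<omega>) < - cmod (Z n n j \<omega>)} = {j\<in>{1..N}. cmod (Z n n j \<omega>) < cmod (Z n n k \<omega>)}"
      by auto
    ultimately show "Mn \<le> card {j\<in>{1..N}. - cmod (Z n n k \<omega>) < - cmod (Z n n j \<omega>)}"
      by (simp only:)
  qed
qed




lemma aux3: "(a::real) \<noteq> 0 \<Longrightarrow> c \<noteq> 0 \<Longrightarrow> (a + e) / a * L = (c * (a + e) * L) / (a * c)"
  by (simp add: field_simps)

theorem mainTheorem16:
  fixes P :: "nat \<Rightarrow> 'a measure"
    and h :: "nat \<Rightarrow> nat \<Rightarrow> nat \<Rightarrow> nat \<Rightarrow> 'a \<Rightarrow> complex"
    and M :: "nat \<Rightarrow> nat" and m :: nat and \<epsilon> :: real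
  assumes prob: "\<And>N. prob_space (P N)"
    and chan: "\<And>N. mdep_channel (P N) N m (h N)"
    and cont: "\<And>N n k x. n \<in> {1..N} \<Longrightarrow> k \<in> {1..N} \<Longrightarrow>
                 measure (P N) {\<omega> \<in> space (P N). cmod (h N n n k \<omega>) = x} = 0"
    and eps: "\<epsilon> > 0"
    and Mlow: "\<And>N. real (M N) \<ge> real (m + 1) * (exp 1 + \<epsilon>) * ln (real N)"
    and Mlim: "(\<lambda>N. real (M N) / real N) \<longlonglongrightarrow> 0"
  shows "((\<lambda>N. measure (P N) {\<omega> \<in> space (P N).
            G_union (P N) (\<lambda>n k \<omega>. cmod (h N n n k \<omega>)) m N (M N) \<omega>
              \<subseteq> B_best (h N) N (M N) \<omega>}) \<longlonglongrightarrow> 1) \<and>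
         ((\<lambda>N. measure (P N) {\<omega> \<in> space (P N).
            G_union (P N) (\<lambda>n k \<omega>. - cmod (h N n n k \<omega>)) m N (M N) \<omega>
              \<subseteq> B_worst (h N) N (M N) \<omega>}) \<longlonglongrightarrow> 1)"
proof -
  define b where "b N = real N * real (m+1) * exp (- (real (M N) / (exp 1 * real (m+1))))" for N
  have "\<forall>\<^sub>F N in sequentially. real (M N) / real N < 1"
    using Mlim by (intro order_tendstoD(2)) auto
  moreover have "\<forall>\<^sub>F N in sequentially. 2 \<le> N" by (rule eventually_ge_at_top)
  ultimately have ev: "\<forall>\<^sub>F N in sequentially. 1 \<le> M N \<and> M N \<le> N \<and> 2 \<le> N"
  proof eventually_elim
    case (elim N)
    then have N: "2 \<le> N" and r: "real (M N) / real N < 1" by auto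
    have "0 < ln (real N)" using N by simp
    moreover have "0 < real (m + 1) * (exp 1 + \<epsilon>)" using eps by (simp add: add_pos_pos)
    ultimately have "0 < real (m + 1) * (exp 1 + \<epsilon>) * ln (real N)" by simp
    then have "0 < real (M N)" using Mlow[of N] by linarith
    moreover have "real (M N) < real N" using r N by (simp add: divide_less_eq)
    ultimately show ?case using N by auto
  qed
  have bb: "b N \<le> real (m+1) * real N powr (- (\<epsilon> / exp 1))" if N: "1 \<le> N" for N
  proof -
    have Npos: "0 < real N" using N by simp
    have "(exp 1 + \<epsilon>) / exp 1 * ln (real N) = (real (m+1) * (exp 1 + \<epsilon>) * ln (real N)) / (exp 1 * real (m+1))"
      by (rule aux3) simp_all
    also have "\<dots> \<le> real (M N) / (exp 1 * real (m+1))"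
      using Mlow[of N] by (intro divide_right_mono) auto
    finally have "(exp 1 + \<epsilon>) / exp 1 * ln (real N) \<le> real (M N) / (exp 1 * real (m+1))" .
    then have "exp (- (real (M N) / (exp 1 * real (m+1)))) \<le> exp (- ((exp 1 + \<epsilon>) / exp 1 * ln (real N)))"
      by simp
    also have "\<dots> = real N powr (- ((exp 1 + \<epsilon>) / exp 1))" using Npos by (simp add: powr_def)
    finally have "b N \<le> real N * real (m+1) * real N powr (- ((exp 1 + \<epsilon>) / exp 1))"
      unfolding b_def using Npos by (intro mult_left_mono) auto
    also have "\<dots> = real (m+1) * (real N powr 1 * real N powr (- ((exp 1 + \<epsilon>) / exp 1)))"
      using Npos by simp
    also have "real N powr 1 * real N powr (- ((exp 1 + \<epsilon>) / exp 1)) = real N powr (1 - (exp 1 + \<epsilon>) / exp 1)"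
      by (simp only: powr_add[symmetric]) simp
    also have "1 - (exp 1 + \<epsilon>) / exp 1 = - (\<epsilon> / exp 1)" by (simp add: field_simps)
    finally show ?thesis .
  qed
  have lim0: "(\<lambda>N. real (m+1) * real N powr (- (\<epsilon> / exp 1))) \<longlonglongrightarrow> 0"
    using tendsto_mult[OF tendsto_const tendsto_neg_powr[OF _ filterlim_real_sequentially], of "- (\<epsilon> / exp 1)" "real (m+1)"] eps
    by simp
  have blim: "b \<longlonglongrightarrow> 0"
  proof (rule tendsto_sandwich[OF _ _ tendsto_const lim0])
    show "\<forall>\<^sub>F N in sequentially. 0 \<le> b N" unfolding b_def by simp
    show "\<forall>\<^sub>F N in sequentially. b N \<le> real (m+1) * real N powr (- (\<epsilon> / exp 1))"
      using eventually_ge_at_top[of 1] by eventually_elim (rule bb)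
  qed
  have lim1: "(\<lambda>N. 1 - b N) \<longlonglongrightarrow> 1" using tendsto_diff[OF tendsto_const blim, of 1] by simp
  show ?thesis
  proof
    show "(\<lambda>N. measure (P N) {\<omega> \<in> space (P N).
            G_union (P N) (\<lambda>n k \<omega>. cmod (h N n n k \<omega>)) m N (M N) \<omega>
              \<subseteq> B_best (h N) N (M N) \<omega>}) \<longlonglongrightarrow> 1"
    proof (rule tendsto_sandwich[OF _ _ lim1 tendsto_const])
      show "\<forall>\<^sub>F N in sequentially. 1 - b N \<le> measure (P N) {\<omega> \<in> space (P N).
            G_union (P N) (\<lambda>n k \<omega>. cmod (h N n n k \<omega>)) m N (M N) \<omega> \<subseteq> B_best (h N) N (M N) \<omega>}"
        using ev by eventually_elim (unfold b_def, rule best_bound[OF prob chan], auto)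
      show "\<forall>\<^sub>F N in sequentially. measure (P N) {\<omega> \<in> space (P N).
            G_union (P N) (\<lambda>n k \<omega>. cmod (h N n n k \<omega>)) m N (M N) \<omega> \<subseteq> B_best (h N) N (M N) \<omega>} \<le> 1"
        by (intro always_eventually allI prob_space.prob_le_1[OF prob])
    qed
    show "(\<lambda>N. measure (P N) {\<omega> \<in> space (P N).
            G_union (P N) (\<lambda>n k \<omega>. - cmod (h N n n k \<omega>)) m N (M N) \<omega>
              \<subseteq> B_worst (h N) N (M N) \<omega>}) \<longlonglongrightarrow> 1"
    proof (rule tendsto_sandwich[OF _ _ lim1 tendsto_const])
      show "\<forall>\<^sub>F N in sequentially. 1 - b N \<le> measure (P N) {\<omega> \<in> space (P N).
            G_union (P N) (\<lambda>n k \<omega>. - cmod (h N n n k \<omega>)) m N (M N) \<omega> \<subseteq> B_worst (h N) N (M N) \<omega>}"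
        using ev by eventually_elim (unfold b_def, rule worst_bound[OF prob chan], auto)
      show "\<forall>\<^sub>F N in sequentially. measure (P N) {\<omega> \<in> space (P N).
            G_union (P N) (\<lambda>n k \<omega>. - cmod (h N n n k \<omega>)) m N (M N) \<omega> \<subseteq> B_worst (h N) N (M N) \<omega>} \<le> 1"
        by (intro always_eventually allI prob_space.prob_le_1[OF prob])
    qed
  qed
qed


end
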